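(* Assume (A1)–(A3), let SLPMM be run with parameters satisfying $2\alpha-p\kappa_g^2\sigma>0$, let $K\ge1$ be an integer and $\bar x^K:=\frac1K\sum_{k=0}^{K-1}x^k$. Then for each $i=1,\dots,p$, $$\mathbb E[g_i(\bar x^K)]\le\frac{1}{\sigma K}\mathbb E[\lambda_i^K]+\frac{\kappa_g}{\alpha}\big(\kappa_f+\sqrt p\,\nu_g\kappa_g\sigma\big)+\frac{\sqrt p\,\kappa_g^2}{\alpha K}\sum_{k=0}^{K-1}\mathbb E[\|\lambda^k\|].$$
   Context: Let $\mathcal C\subset\mathbb R^n$ be a nonempty compact convex set. Let $\xi$ be a random vector whose distribution is supported on $\Xi\subseteq\mathbb R^q$, and let $F:\mathcal C\times\Xi\to\mathbb R$ and $G_i:\mathcal C\times\Xi\to\mathbb R$ ($i=1,\dots,p$) be such that $F(\cdot,\xi)$, $G_i(\cdot,\xi)$ are convex and continuous on $\mathcal C$ for every $\xi$, and $f(x):=\mathbb E[F(x,\xi)]$, $g_i(x):=\mathbb E[G_i(x,\xi)]$ are finite on $\mathcal C$. Write $G=(G_1,\dots,G_p)^T$. Stochastic subgradients: $v_0(x,\xi)\in\partial_xF(x,\xi)$, $v_i(x,\xi)\in\partial_xG_i(x,\xi)$. $[t]_+=\max\{t,0\}$, $[t]_+^2=(\max\{t,0\})^2$. SLPMM: fix $\sigma,\alpha>0$, $x^0\in\mathcal C$, $\lambda^0=0\in\mathbb R^p$, i.i.d. copies $\xi^0,\xi^1,\dots$ of $\xi$. For $k\ge0$, $x^{k+1}=\arg\min_{x\in\mathcal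 C}\{\mathcal L^k_\sigma(x,\lambda^k)+\frac{\alpha}{2}\|x-x^k\|^2\}$ with $\mathcal L^k_\sigma(x,\lambda):=F(x^k,\xi^k)+\langle v_0(x^k,\xi^k),x-x^k\rangle+\frac{1}{2\sigma}[\sum_{i=1}^p[\lambda_i+\sigma(G_i(x^k,\xi^k)+\langle v_i(x^k,\xi^k),x-x^k\rangle)]_+^2-\|\lambda\|^2]$, and $\lambda_i^{k+1}=[\lambda_i^k+\sigma(G_i(x^k,\xi^k)+\langle v_i(x^k,\xi^k),x^{k+1}-x^k\rangle)]_+$. Assumptions: (A1) $\|x'-x''\|\le R$ on $\mathcal C$. (A2) $\|G(x,\xi)\|\le\nu_g$ for all $x\in\mathcal C,\xi\in\Xi$. (A3) $\|v_0(x,\xi)\|\le\kappa_f$, $\|v_i(x,\xi)\|\le\kappa_g$ for all $x,\xi$. *)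

theory Defs
  imports "HOL-Probability.Probability"
begin

text \<open>Constraint indices are 0,...,p-1 (the paper's 1,...,p). Multiplier vectors in R^p
  are represented as functions nat => real, only the entries i < p being relevant.\<close>

definition vnorm :: "nat \<Rightarrow> (nat \<Rightarrow> real) \<Rightarrow> real" where
  "vnorm p lam = sqrt (\<Sum>i<p. (lam i)^2)"

definition subgrad_on :: "'a::real_inner set \<Rightarrow> ('a \<Rightarrow> real) \<Rightarrow> 'a \<Rightarrow> 'a \<Rightarrow> bool" where
  "subgrad_on C f x u \<longleftrightarrow> (\<forall>y\<in>C. f x + inner u (y - x) \<le> f y)"

definition slpmm_L ::
  "nat \<Rightarrow> real \<Rightarrow> ('a::real_inner \<Rightarrow> 'b \<Rightarrow> real) \<Rightarrow> (nat \<Rightarrow> 'a \<Rightarrow> 'b \<Rightarrow> real)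
   \<Rightarrow> ('a \<Rightarrow> 'b \<Rightarrow> 'a) \<Rightarrow> (nat \<Rightarrow> 'a \<Rightarrow> 'b \<Rightarrow> 'a) \<Rightarrow> 'a \<Rightarrow> 'b \<Rightarrow> 'a \<Rightarrow> (nat \<Rightarrow> real) \<Rightarrow> real" where
  "slpmm_L p \<sigma> F G v0 v xk \<xi> y lam =
     F xk \<xi> + inner (v0 xk \<xi>) (y - xk)
     + (1 / (2 * \<sigma>)) * ((\<Sum>i<p. (max (lam i + \<sigma> * (G i xk \<xi> + inner (v i xk \<xi>) (y - xk))) 0)^2)
                         - (vnorm p lam)^2)"

definition slpmm_step ::
  "'a::real_inner set \<Rightarrow> nat \<Rightarrow> real \<Rightarrow> real \<Rightarrow> ('a \<Rightarrow> 'b \<Rightarrow> real) \<Rightarrow> (nat \<Rightarrow> 'a \<Rightarrow> 'b \<Rightarrow> real)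
   \<Rightarrow> ('a \<Rightarrow> 'b \<Rightarrow> 'a) \<Rightarrow> (nat \<Rightarrow> 'a \<Rightarrow> 'b \<Rightarrow> 'a) \<Rightarrow> 'a \<times> (nat \<Rightarrow> real) \<Rightarrow> 'b \<Rightarrow> 'a \<times> (nat \<Rightarrow> real)" where
  "slpmm_step C p \<sigma> \<alpha> F G v0 v s \<xi> =
     (let xk = fst s; lam = snd s;
          obj = (\<lambda>y. slpmm_L p \<sigma> F G v0 v xk \<xi> y lam + \<alpha> / 2 * (norm (y - xk))^2);
          x' = (SOME y. y \<in> C \<and> (\<forall>z\<in>C. obj y \<le> obj z))
      in (x', \<lambda>i. if i < p then max (lam i + \<sigma> * (G i xk \<xi> + inner (v i xk \<xi>) (x' - xk))) 0 else 0))"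

primrec slpmm ::
  "'a::real_inner set \<Rightarrow> nat \<Rightarrow> real \<Rightarrow> real \<Rightarrow> ('a \<Rightarrow> 'b \<Rightarrow> real) \<Rightarrow> (nat \<Rightarrow> 'a \<Rightarrow> 'b \<Rightarrow> real)
   \<Rightarrow> ('a \<Rightarrow> 'b \<Rightarrow> 'a) \<Rightarrow> (nat \<Rightarrow> 'a \<Rightarrow> 'b \<Rightarrow> 'a) \<Rightarrow> 'a \<Rightarrow> (nat \<Rightarrow> 'b) \<Rightarrow> nat \<Rightarrow> 'a \<times> (nat \<Rightarrow> real)" where
  "slpmm C p \<sigma> \<alpha> F G v0 v x0 xis 0 = (x0, \<lambda>_. 0)"
| "slpmm C p \<sigma> \<alpha> F G v0 v x0 xis (Suc k) =
     slpmm_step C p \<sigma> \<alpha> F G v0 v (slpmm C p \<sigma> \<alpha> F G v0 v x0 xis k) (xis k)"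

end

theory Submission
  imports Defs
begin


lemma argmin_measurable:
  fixes f :: "'m \<Rightarrow> 'a::euclidean_space \<Rightarrow> real" and C :: "'a set"
  assumes C: "compact C" "C \<noteq> {}"
  and cont: "\<And>\<omega>. \<omega> \<in> space M' \<Longrightarrow> continuous_on C (f \<omega>)"
  and meas: "\<And>z. z \<in> C \<Longrightarrow> (\<lambda>\<omega>. f \<omega> z) \<in> borel_measurable M'"
  and uniq: "\<And>\<omega> y1 y2. \<omega> \<in> space M' \<Longrightarrow> y1 \<in> C \<Longrightarrow> y2 \<in> C \<Longrightarrow> (\<forall>z\<in>C. f \<omega> y1 \<le> f \<omega> z)
      \<Longrightarrow> (\<forall>z\<in>C. f \<omega> y2 \<le> f \<omega> z) \<Longrightarrow> y1 = y2"
  shows "(\<lambda>\<omega>. SOME y. y \<in> C \<and> (\<forall>z\<in>C. f \<omega> y \<le> f \<omega> z)) \<in> borel_measurable M'"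
proof -
  define m where "m = (\<lambda>\<omega>. SOME y. y \<in> C \<and> (\<forall>z\<in>C. f \<omega> y \<le> f \<omega> z))"
  have mprop: "m \<omega> \<in> C \<and> (\<forall>z\<in>C. f \<omega> (m \<omega>) \<le> f \<omega> z)" if om0: "\<omega> \<in> space M'" for \<omega>
  proof -
    obtain y where "y \<in> C" "\<forall>z\<in>C. f \<omega> y \<le> f \<omega> z"
      using continuous_attains_inf[OF C cont[OF om0]] by blast
    then show ?thesis unfolding m_def by (rule someI[where x=y, OF conjI])
  qed
  obtain DC where DC: "countable DC" "DC \<subseteq> C" "C \<subseteq> closure DC" using separable by blast
  have DCne: "DC \<noteq> {}" using DC C by auto
  have key: "{\<omega>\<in>space M'. m \<omega> \<in> K} \<in> sets M'" if K: "closed K" for K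
  proof -
    obtain DK where DK: "countable DK" "DK \<subseteq> C \<inter> K" "C \<inter> K \<subseteq> closure DK"
      using separable by blast
    have claim: "m \<omega> \<in> K \<longleftrightarrow> (\<forall>z\<in>DC. \<forall>n::nat. \<exists>y\<in>DK. f \<omega> y \<le> f \<omega> z + 1 / Suc n)"
      if om: "\<omega> \<in> space M'" for \<omega>
    proof
      assume mK: "m \<omega> \<in> K"
      show "\<forall>z\<in>DC. \<forall>n::nat. \<exists>y\<in>DK. f \<omega> y \<le> f \<omega> z + 1 / Suc n"
      proof (intro ballI allI)
        fix z n assume z: "z \<in> DC"
        have e: "(0::real) < 1 / Suc n" by simp
        have mC: "m \<omega> \<in> C" using mprop[OF om] by blast
        obtain d where d: "d > 0" "\<forall>x'\<in>C. dist x' (m \<omega>) < d \<longrightarrow> dist (f \<omega> x') (f \<omega> (m \<omega>)) < 1 / Suc n"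
          using cont[OF om] mC e unfolding continuous_on_iff by metis
        have "m \<omega> \<in> closure DK" using DK mC mK by blast
        then obtain y where y: "y \<in> DK" "dist y (m \<omega>) < d" using d(1) closure_approachable by blast
        have "y \<in> C" using y DK by blast
        then have "f \<omega> y < f \<omega> (m \<omega>) + 1 / Suc n" using d y by (auto simp: dist_real_def)
        moreover have "f \<omega> (m \<omega>) \<le> f \<omega> z" using mprop[OF om] z DC by blast
        ultimately show "\<exists>y\<in>DK. f \<omega> y \<le> f \<omega> z + 1 / Suc n" using y by (intro bexI[of _ y]) auto
      qed
    next
      assume H: "\<forall>z\<in>DC. \<forall>n::nat. \<exists>y\<in>DK. f \<omega> y \<le> f \<omega> z + 1 / Suc n"
      obtain z0 where "z0 \<in> DC" using DCne by blast
      then obtain y0 where "y0 \<in> DK" using H by blast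
      then have ne: "C \<inter> K \<noteq> {}" using DK by blast
      have cK: "compact (C \<inter> K)" using C K by (simp add: compact_Int_closed)
      obtain ys where ys: "ys \<in> C \<inter> K" "\<forall>y\<in>C \<inter> K. f \<omega> ys \<le> f \<omega> y"
        using continuous_attains_inf[OF cK ne continuous_on_subset[OF cont[OF om]]] by blast
      have "f \<omega> ys \<le> f \<omega> z" if z: "z \<in> C" for z
      proof (rule field_le_epsilon)
        fix e :: real assume e: "0 < e"
        obtain n :: nat where n: "inverse (real (Suc n)) < e / 2" using reals_Archimedean e
          by (metis half_gt_zero)
        obtain d where d: "d > 0" "\<forall>x'\<in>C. dist x' z < d \<longrightarrow> dist (f \<omega> x') (f \<omega> z) < e / 2"
          using cont[OF om] z e unfolding continuous_on_iff by (metis half_gt_zero)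
        have "z \<in> closure DC" using DC z by blast
        then obtain z' where z': "z' \<in> DC" "dist z' z < d" using d(1) closure_approachable by blast
        have "z' \<in> C" using z' DC by blast
        then have "\<bar>f \<omega> z' - f \<omega> z\<bar> < e / 2" using d z' by (auto simp: dist_real_def)
        then have "f \<omega> z' < f \<omega> z + e / 2" by linarith
        moreover obtain y where "y \<in> DK" "f \<omega> y \<le> f \<omega> z' + 1 / Suc n" using H z' by blast
        moreover have "f \<omega> ys \<le> f \<omega> y" using ys \<open>y \<in> DK\<close> DK by blast
        moreover have "1 / real (Suc n) < e / 2" using n by (simp add: inverse_eq_divide)
        ultimately show "f \<omega> ys \<le> f \<omega> z + e" by linarith
      qed
      then have "ys = m \<omega>" using uniq[OF om, of ys "m \<omega>"] ys mprop[OF om] by blast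
      then show "m \<omega> \<in> K" using ys by blast
    qed
    have "{\<omega>\<in>space M'. m \<omega> \<in> K} = space M' \<inter> (\<Inter>z\<in>DC. \<Inter>n\<in>UNIV. \<Union>y\<in>DK. {\<omega>\<in>space M'. f \<omega> y \<le> f \<omega> z + 1 / Suc n})"
      using claim DCne by auto
    also have "\<dots> \<in> sets M'"
    proof (intro sets.Int sets.top sets.countable_INT' sets.countable_UN' DC(1) DK(1) DCne image_subsetI)
      fix z y n assume "z \<in> DC" "y \<in> DK"
      then have [measurable]: "(\<lambda>\<omega>. f \<omega> z) \<in> borel_measurable M'" "(\<lambda>\<omega>. f \<omega> y) \<in> borel_measurable M'"
        using meas DC DK by auto
      show "{\<omega>\<in>space M'. f \<omega> y \<le> f \<omega> z + 1 / Suc n} \<in> sets M'" by measurable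
    qed auto
    finally show ?thesis .
  qed
  show ?thesis unfolding m_def[symmetric]
  proof (rule borel_measurableI)
    fix S :: "'a set" assume "open S"
    then have "closed (- S)" by auto
    have "m -` S \<inter> space M' = space M' - {\<omega>\<in>space M'. m \<omega> \<in> - S}" by auto
    then show "m -` S \<inter> space M' \<in> sets M'" using key[OF \<open>closed (- S)\<close>] by auto
  qed
qed



lemma phi_convex_mid: "(max ((a+b)/2) 0)^2 \<le> ((max a 0)^2 + (max (b::real) 0)^2)/2"
proof -
  have h1: "0 \<le> max ((a+b)/2) 0" by simp
  have h2: "max ((a+b)/2) 0 \<le> (max a 0 + max b 0)/2" by (auto simp: max_def)
  have "(max ((a+b)/2) 0)^2 \<le> ((max a 0 + max b 0)/2)^2" using h2 h1 by (rule power_mono)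
  also have "\<dots> \<le> ((max a 0)^2 + (max (b::real) 0)^2)/2"
    using sum_squares_ge_zero[of "max a 0 - max b 0" 0] by (simp add: power2_eq_square field_simps)
  finally show ?thesis .
qed

lemma phi_quad: "(max (b - s) 0)^2 \<le> (max (b::real) 0)^2 - 2 * s * (max b 0) + s^2"
proof -
  have h1: "0 \<le> max (b - s) 0" by simp
  have h2: "max (b - s) 0 \<le> \<bar>max b 0 - s\<bar>" by (auto simp: max_def)
  have "(max (b - s) 0)^2 \<le> (\<bar>max b 0 - s\<bar>)^2" using h2 h1 by (rule power_mono)
  then show ?thesis by (simp add: power2_eq_square algebra_simps)
qed

lemma norm_mid: fixes a b :: "'a::real_inner"
  shows "(norm ((1/2) *\<^sub>R (a+b)))^2 = ((norm a)^2 + (norm b)^2)/2 - (norm (a-b))^2/4"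
proof -
  have e1: "(norm (a+b))^2 = inner a a + 2 * inner a b + inner b b"
    by (simp add: power2_norm_eq_inner inner_add_left inner_add_right inner_commute)
  have e2: "(norm (a-b))^2 = inner a a - 2 * inner a b + inner b b"
    by (simp add: power2_norm_eq_inner inner_diff_left inner_diff_right inner_commute)
  have e3: "(norm a)^2 = inner a a" "(norm b)^2 = inner b b" by (simp_all add: power2_norm_eq_inner)
  have h: "(norm ((1/2) *\<^sub>R (a+b)))^2 = (norm (a+b))^2 / 4"
    by (simp add: power_mult_distrib power_divide)
  show ?thesis unfolding h e1 e2 e3 by (simp add: field_simps)
qed

lemma sum_abs_sqrt: "(\<Sum>i<p. \<bar>u i\<bar>) \<le> sqrt (real p) * sqrt (\<Sum>i<p. (u i)^2 :: real)"
proof -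
  have "(\<Sum>i<p. 1 * \<bar>u i\<bar>)^2 \<le> (\<Sum>i<p. 1^2) * (\<Sum>i<p. \<bar>u i\<bar>^2)"
    by (rule Cauchy_Schwarz_ineq_sum)
  then have "(\<Sum>i<p. \<bar>u i\<bar>)^2 \<le> real p * (\<Sum>i<p. (u i)^2)" by simp
  then have "sqrt ((\<Sum>i<p. \<bar>u i\<bar>)^2) \<le> sqrt (real p * (\<Sum>i<p. (u i)^2))" by (rule real_sqrt_le_mono)
  then show ?thesis by (simp add: real_sqrt_mult sum_nonneg)
qed


lemma aux_mid: fixes a b1 b2 c V :: real
  assumes "0 \<le> c" "a \<le> (b1+b2)/2" shows "c*(a - V) \<le> (c*(b1-V) + c*(b2-V))/2"
proof -
  have "c*a \<le> c*((b1+b2)/2)" by (rule mult_left_mono[OF assms(2) assms(1)])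
  moreover have "c*((b1+b2)/2) = (c*b1 + c*b2)/2" "c*(a-V) = c*a - c*V" "c*(b1-V) = c*b1 - c*V" "c*(b2-V) = c*b2 - c*V"
    by (simp_all add: algebra_simps)
  ultimately show ?thesis by argo
qed

definition obj where
  "obj p \<sigma> \<alpha> F G v0 v xk s lam y = slpmm_L p \<sigma> F G v0 v xk s y lam + \<alpha> / 2 * (norm (y - xk))^2"

lemma obj_alt: "obj p \<sigma> \<alpha> F G v0 v xk s lam y = F xk s + inner (v0 xk s) (y - xk)
   + (1 / (2 * \<sigma>)) * ((\<Sum>i<p. (max (lam i + \<sigma> * (G i xk s + inner (v i xk s) (y - xk))) 0)^2) - (vnorm p lam)^2)
   + \<alpha> / 2 * (norm (y - xk))^2"
  by (simp add: obj_def slpmm_L_def)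

lemma step_fst: "fst (slpmm_step C p \<sigma> \<alpha> F G v0 v st s) =
  (SOME y. y \<in> C \<and> (\<forall>z\<in>C. obj p \<sigma> \<alpha> F G v0 v (fst st) s (snd st) y \<le> obj p \<sigma> \<alpha> F G v0 v (fst st) s (snd st) z))"
  by (simp add: slpmm_step_def Let_def obj_def)

lemma step_snd: "snd (slpmm_step C p \<sigma> \<alpha> F G v0 v st s) i =
  (if i < p then max (snd st i + \<sigma> * (G i (fst st) s + inner (v i (fst st) s) (fst (slpmm_step C p \<sigma> \<alpha> F G v0 v st s) - fst st))) 0 else 0)"
  by (simp add: slpmm_step_def Let_def)

lemma obj_cont: "continuous_on C (obj p \<sigma> \<alpha> F G v0 v xk s lam)"
  unfolding obj_def slpmm_L_def by (intro continuous_intros)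

lemma obj_mid:
  assumes "\<sigma> > 0"
  shows "obj p \<sigma> \<alpha> F G v0 v xk s lam ((1/2) *\<^sub>R (y1 + y2)) \<le>
    (obj p \<sigma> \<alpha> F G v0 v xk s lam y1 + obj p \<sigma> \<alpha> F G v0 v xk s lam y2) / 2 - \<alpha> / 8 * (norm (y1 - y2))^2"
proof -
  define ym where "ym = (1/2) *\<^sub>R (y1 + y2)"
  define A where "A y i = lam i + \<sigma> * (G i xk s + inner (v i xk s) (y - xk))" for y i
  have hx: "(1/2::real) *\<^sub>R xk + (1/2) *\<^sub>R xk = xk" by (simp add: scaleR_add_left[symmetric])
  have ymx: "ym - xk = (1/2) *\<^sub>R ((y1 - xk) + (y2 - xk))"
  proof -
    have "ym - xk = (1/2) *\<^sub>R (y1 + y2) - ((1/2::real) *\<^sub>R xk + (1/2) *\<^sub>R xk)" using hx by (simp add: ym_def)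
    then show ?thesis by (simp add: algebra_simps)
  qed
  have Aeq: "A ym i = (A y1 i + A y2 i) / 2" for i
    by (simp add: A_def ymx inner_add_right inner_diff_right field_simps)
  have S: "(\<Sum>i<p. (max (A ym i) 0)^2) \<le> ((\<Sum>i<p. (max (A y1 i) 0)^2) + (\<Sum>i<p. (max (A y2 i) 0)^2)) / 2"
  proof -
    have "(\<Sum>i<p. (max (A ym i) 0)^2) \<le> (\<Sum>i<p. ((max (A y1 i) 0)^2 + (max (A y2 i) 0)^2) / 2)"
      by (intro sum_mono) (subst Aeq, rule phi_convex_mid)
    also have "\<dots> = ((\<Sum>i<p. (max (A y1 i) 0)^2) + (\<Sum>i<p. (max (A y2 i) 0)^2)) / 2"
      by (simp only: sum_divide_distrib[symmetric] sum.distrib)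
    finally show ?thesis .
  qed
  have lin: "inner (v0 xk s) (ym - xk) = (inner (v0 xk s) (y1 - xk) + inner (v0 xk s) (y2 - xk)) / 2"
    by (simp add: ymx inner_add_right)
  have nrm: "(norm (ym - xk))^2 = ((norm (y1 - xk))^2 + (norm (y2 - xk))^2)/2 - (norm (y1 - y2))^2/4"
    using norm_mid[of "y1 - xk" "y2 - xk"] by (simp add: ymx)
  have nrm2: "\<alpha>/2*(norm(ym-xk))^2 = (\<alpha>/2*(norm(y1-xk))^2 + \<alpha>/2*(norm(y2-xk))^2)/2 - \<alpha>/8*(norm(y1-y2))^2"
    unfolding nrm by (simp add: algebra_simps)
  have c: "1 / (2 * \<sigma>) > 0" using assms by simp
  have S2: "(1 / (2 * \<sigma>)) * ((\<Sum>i<p. (max (A ym i) 0)^2) - (vnorm p lam)^2) \<le>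
     ((1 / (2 * \<sigma>)) * ((\<Sum>i<p. (max (A y1 i) 0)^2) - (vnorm p lam)^2)
     + (1 / (2 * \<sigma>)) * ((\<Sum>i<p. (max (A y2 i) 0)^2) - (vnorm p lam)^2)) / 2"
    using aux_mid[OF less_imp_le[OF c] S] .
  show ?thesis unfolding ym_def[symmetric] obj_alt A_def[symmetric]
    using S2 lin nrm2 by argo
qed

lemma obj_uniq:
  assumes "\<sigma> > 0" "\<alpha> > 0" "convex C" "y1 \<in> C" "y2 \<in> C"
    and m1: "\<forall>z\<in>C. obj p \<sigma> \<alpha> F G v0 v xk s lam y1 \<le> obj p \<sigma> \<alpha> F G v0 v xk s lam z"
    and m2: "\<forall>z\<in>C. obj p \<sigma> \<alpha> F G v0 v xk s lam y2 \<le> obj p \<sigma> \<alpha> F G v0 v xk s lam z"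
  shows "y1 = y2"
proof -
  have "(1/2) *\<^sub>R (y1 + y2) = (1/2) *\<^sub>R y1 + (1/2) *\<^sub>R y2" by (simp add: scaleR_right_distrib)
  moreover have "(1/2::real) *\<^sub>R y1 + (1/2::real) *\<^sub>R y2 \<in> C"
    using assms(3-5) unfolding convex_def by (metis add_divide_distrib divide_nonneg_nonneg
        le_numeral_extra(1) one_add_one zero_le_numeral divide_self_if zero_neq_numeral)
  ultimately have ymC: "(1/2) *\<^sub>R (y1 + y2) \<in> C" by simp
  have "obj p \<sigma> \<alpha> F G v0 v xk s lam y1 \<le> obj p \<sigma> \<alpha> F G v0 v xk s lam ((1/2) *\<^sub>R (y1 + y2))"
    using m1 ymC by blast
  moreover have "obj p \<sigma> \<alpha> F G v0 v xk s lam y1 \<le> obj p \<sigma> \<alpha> F G v0 v xk s lam y2" using m1 assms by blast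
  moreover have "obj p \<sigma> \<alpha> F G v0 v xk s lam y2 \<le> obj p \<sigma> \<alpha> F G v0 v xk s lam y1" using m2 assms by blast
  ultimately have "\<alpha> / 8 * (norm (y1 - y2))^2 \<le> 0" using obj_mid[OF assms(1), of p \<alpha> F G v0 v xk s lam y1 y2] by argo
  then have "(norm (y1 - y2))^2 \<le> 0" using assms(2) by (simp add: mult_le_0_iff)
  then show ?thesis by simp
qed

lemma step_min:
  assumes "compact C" "C \<noteq> {}"
  shows "fst (slpmm_step C p \<sigma> \<alpha> F G v0 v st s) \<in> C \<and>
    (\<forall>z\<in>C. obj p \<sigma> \<alpha> F G v0 v (fst st) s (snd st) (fst (slpmm_step C p \<sigma> \<alpha> F G v0 v st s)) \<le> obj p \<sigma> \<alpha> F G v0 v (fst st) s (snd st) z)"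
proof -
  obtain y where "y \<in> C" "\<forall>z\<in>C. obj p \<sigma> \<alpha> F G v0 v (fst st) s (snd st) y \<le> obj p \<sigma> \<alpha> F G v0 v (fst st) s (snd st) z"
    using continuous_attains_inf[OF assms obj_cont[of C p \<sigma> \<alpha> F G v0 v "fst st" s "snd st"]] by blast
  then show ?thesis unfolding step_fst by (rule someI[where x=y, OF conjI])
qed


lemma lim_le0: fixes X B :: real assumes B: "B \<ge> 0" and H: "\<And>t. 0 < t \<Longrightarrow> t \<le> 1 \<Longrightarrow> X \<le> t * B" shows "X \<le> 0"
proof (rule ccontr)
  assume "\<not> X \<le> 0"
  then have X: "X > 0" by simp
  define t where "t = min 1 (X / (2*(B+1)))"
  have t: "0 < t" "t \<le> 1" using X B by (auto simp: t_def)
  have "X \<le> t * B" using H t by blast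
  also have "\<dots> \<le> X / (2*(B+1)) * B" using B by (intro mult_right_mono) (auto simp: t_def)
  also have "\<dots> < X"
  proof -
    have q: "B / (2*(B+1)) < 1" using B by (simp add: field_simps)
    then have "X * (B/(2*(B+1))) < X * 1" using X by (intro mult_strict_left_mono)
    moreover have "X/(2*(B+1))*B = X * (B/(2*(B+1)))" by simp
    ultimately show ?thesis by simp
  qed
  finally show False by simp
qed

lemma mono_max: assumes "0 < \<sigma>" shows "c * max a 0 \<le> c * max (a + \<sigma>*c) (0::real)"
proof (cases "c \<ge> 0")
  case True
  have "0 \<le> \<sigma>*c" using assms True by simp
  then have "max a 0 \<le> max (a + \<sigma>*c) 0" by (auto simp: max_def)
  then show ?thesis using True by (rule mult_left_mono)
next
  case False
  have "\<sigma>*c \<le> 0" using assms False by (simp add: mult_nonneg_nonpos)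
  then have "max (a + \<sigma>*c) 0 \<le> max a 0" by (auto simp: max_def)
  then show ?thesis using False by (intro mult_left_mono_neg) auto
qed

lemma step_bound:
  fixes xk x' :: "'a::real_inner"
  assumes cvx: "convex C" and xk: "xk \<in> C" and x'C: "x' \<in> C"
    and min: "\<forall>z\<in>C. obj p \<sigma> \<alpha> F G v0 v xk s lam x' \<le> obj p \<sigma> \<alpha> F G v0 v xk s lam z"
    and sa: "\<sigma> > 0" "\<alpha> > 0"
    and nv0: "norm (v0 xk s) \<le> \<kappa>f" and nv: "\<And>i. i < p \<Longrightarrow> norm (v i xk s) \<le> \<kappa>g"
    and nG: "sqrt (\<Sum>i<p. (G i xk s)^2) \<le> \<nu>g" and kg: "\<kappa>g \<ge> 0"
  shows "\<alpha> * norm (x' - xk) \<le> \<kappa>f + sqrt (real p) * \<kappa>g * (vnorm p lam + \<sigma> * \<nu>g)"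
proof -
  define d where "d = x' - xk"
  define c where "c i = inner (v i xk s) d" for i
  define a where "a i = lam i + \<sigma> * G i xk s" for i
  define w where "w = v0 xk s"
  define Q where "Q = (\<Sum>i<p. c i * max (a i + \<sigma> * c i) 0)"
  define Rr where "Rr = (\<Sum>i<p. (c i)^2)"
  define P where "P = (\<Sum>i<p. (max (a i + \<sigma> * c i) 0)^2)"
  define V where "V = (vnorm p lam)^2"
  define N where "N = (norm d)^2"
  have obj1: "obj p \<sigma> \<alpha> F G v0 v xk s lam x' = F xk s + inner w d + (1/(2*\<sigma>))*(P - V) + \<alpha>/2 * N"
    by (simp add: obj_alt P_def V_def N_def a_def c_def d_def w_def algebra_simps)
  have ineq: "inner w d + Q + \<alpha> * N \<le> t * (\<alpha>/2 * N + \<sigma>/2 * Rr)" if t: "0 < t" "t \<le> 1" for t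
  proof -
    define yt where "yt = x' - t *\<^sub>R d"
    have "yt = (1 - t) *\<^sub>R x' + t *\<^sub>R xk" by (simp add: yt_def d_def algebra_simps)
    then have ytC: "yt \<in> C" using cvx x'C xk t unfolding convex_def by auto
    have ytx: "yt - xk = (1 - t) *\<^sub>R d" by (simp add: yt_def d_def algebra_simps)
    have nyt: "(norm (yt - xk))^2 = (1-t)^2 * N" unfolding ytx N_def by (simp add: power_mult_distrib)
    define P2 where "P2 = (\<Sum>i<p. (max (a i + \<sigma> * c i - \<sigma> * t * c i) 0)^2)"
    have obj2: "obj p \<sigma> \<alpha> F G v0 v xk s lam yt = F xk s + (1-t) * inner w d + (1/(2*\<sigma>))*(P2 - V) + \<alpha>/2 * ((1-t)^2 * N)"
      unfolding obj_alt nyt by (simp add: ytx P2_def V_def a_def c_def w_def algebra_simps)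
    have "P2 \<le> (\<Sum>i<p. (max (a i + \<sigma> * c i) 0)^2 - 2 * (\<sigma> * t * c i) * (max (a i + \<sigma> * c i) 0) + (\<sigma> * t * c i)^2)"
      unfolding P2_def by (intro sum_mono phi_quad)
    also have "\<dots> = P - (\<Sum>i<p. 2 * (\<sigma> * t * c i) * (max (a i + \<sigma> * c i) 0)) + (\<Sum>i<p. (\<sigma> * t * c i)^2)"
      by (simp add: P_def sum.distrib sum_subtractf)
    also have "(\<Sum>i<p. 2 * (\<sigma> * t * c i) * (max (a i + \<sigma> * c i) 0)) = 2 * \<sigma> * t * Q"
      by (simp add: Q_def sum_distrib_left algebra_simps)
    also have "(\<Sum>i<p. (\<sigma> * t * c i)^2) = \<sigma>^2 * t^2 * Rr"
      by (simp add: Rr_def sum_distrib_left power_mult_distrib)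
    finally have P2le: "P2 \<le> P - 2 * \<sigma> * t * Q + \<sigma>^2 * t^2 * Rr" .
    have c0: "1/(2*\<sigma>) \<ge> 0" using sa by simp
    have "(1/(2*\<sigma>))*(P2 - V) \<le> (1/(2*\<sigma>))*(P - 2 * \<sigma> * t * Q + \<sigma>^2 * t^2 * Rr - V)"
      using P2le c0 by (intro mult_left_mono) auto
    also have "\<dots> = (1/(2*\<sigma>))*(P - V) - t*Q + t*(t*(\<sigma>/2*Rr))"
      using sa by (simp add: field_simps power2_eq_square)
    finally have P2c: "(1/(2*\<sigma>))*(P2 - V) \<le> (1/(2*\<sigma>))*(P - V) - t*Q + t*(t*(\<sigma>/2*Rr))" .
    have "obj p \<sigma> \<alpha> F G v0 v xk s lam x' \<le> obj p \<sigma> \<alpha> F G v0 v xk s lam yt" using min ytC by blast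
    then have I: "inner w d + (1/(2*\<sigma>))*(P - V) + \<alpha>/2 * N \<le> (1-t) * inner w d + (1/(2*\<sigma>))*(P2 - V) + \<alpha>/2 * ((1-t)^2 * N)"
      unfolding obj1 obj2 by argo
    have e1: "(1-t) * inner w d = inner w d - t * inner w d" by (simp add: algebra_simps)
    have e2: "\<alpha>/2 * ((1-t)^2 * N) = \<alpha>/2 * N - t * (\<alpha> * N) + t * (t * (\<alpha>/2 * N))"
      by (simp add: power2_eq_square algebra_simps)
    have e3: "t * (inner w d + Q + \<alpha> * N) = t * inner w d + t * Q + t * (\<alpha> * N)" by (simp add: algebra_simps)
    have e4: "t * (t * (\<alpha>/2 * N + \<sigma>/2 * Rr)) = t * (t * (\<alpha>/2 * N)) + t * (t * (\<sigma>/2 * Rr))" by (simp add: algebra_simps)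
    have "t * (inner w d + Q + \<alpha> * N) \<le> t * (t * (\<alpha>/2 * N + \<sigma>/2 * Rr))"
      using I P2c e1 e2 e3 e4 by argo
    then show ?thesis using t(1) by (rule mult_left_le_imp_le)
  qed
  have "0 \<le> \<alpha>/2 * N" using sa by (simp add: N_def)
  moreover have "0 \<le> \<sigma>/2 * Rr" using sa by (simp add: Rr_def sum_nonneg)
  ultimately have B0: "\<alpha>/2 * N + \<sigma>/2 * Rr \<ge> 0" by simp
  have le0: "inner w d + Q + \<alpha> * N \<le> 0" by (rule lim_le0[OF B0 ineq])
  have Qge: "(\<Sum>i<p. c i * max (a i) 0) \<le> Q" unfolding Q_def by (intro sum_mono mono_max sa)
  have cb: "\<bar>c i\<bar> \<le> \<kappa>g * norm d" if "i < p" for i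
  proof -
    have "\<bar>c i\<bar> \<le> norm (v i xk s) * norm d" unfolding c_def by (rule Cauchy_Schwarz_ineq2)
    also have "\<dots> \<le> \<kappa>g * norm d" using nv[OF that] by (intro mult_right_mono) auto
    finally show ?thesis .
  qed
  have bnd1: "- (\<Sum>i<p. c i * max (a i) 0) \<le> (\<kappa>g * norm d) * (\<Sum>i<p. \<bar>a i\<bar>)"
  proof -
    have "- (\<Sum>i<p. c i * max (a i) 0) = (\<Sum>i<p. - (c i * max (a i) 0))" by (simp add: sum_negf)
    also have "\<dots> \<le> (\<Sum>i<p. (\<kappa>g * norm d) * \<bar>a i\<bar>)"
    proof (intro sum_mono)
      fix i assume "i \<in> {..<p}"
      then have i: "i < p" by simp
      have "- (c i * max (a i) 0) \<le> \<bar>c i\<bar> * \<bar>max (a i) 0\<bar>" by (metis abs_ge_minus_self abs_mult)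
      also have "\<dots> \<le> (\<kappa>g * norm d) * \<bar>a i\<bar>"
        using cb[OF i] by (intro mult_mono) auto
      finally show "- (c i * max (a i) 0) \<le> (\<kappa>g * norm d) * \<bar>a i\<bar>" .
    qed
    also have "\<dots> = (\<kappa>g * norm d) * (\<Sum>i<p. \<bar>a i\<bar>)" by (simp add: sum_distrib_left)
    finally show ?thesis .
  qed
  have suma: "(\<Sum>i<p. \<bar>a i\<bar>) \<le> sqrt (real p) * (vnorm p lam + \<sigma> * \<nu>g)"
  proof -
    have "(\<Sum>i<p. \<bar>a i\<bar>) \<le> (\<Sum>i<p. \<bar>lam i\<bar> + \<sigma> * \<bar>G i xk s\<bar>)"
      using sa by (intro sum_mono) (auto simp: a_def abs_mult intro: order.trans[OF abs_triangle_ineq])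
    also have "\<dots> = (\<Sum>i<p. \<bar>lam i\<bar>) + \<sigma> * (\<Sum>i<p. \<bar>G i xk s\<bar>)" by (simp add: sum.distrib sum_distrib_left)
    also have "\<dots> \<le> sqrt (real p) * vnorm p lam + \<sigma> * (sqrt (real p) * \<nu>g)"
    proof -
      have "(\<Sum>i<p. \<bar>lam i\<bar>) \<le> sqrt (real p) * vnorm p lam" unfolding vnorm_def by (rule sum_abs_sqrt)
      moreover have "(\<Sum>i<p. \<bar>G i xk s\<bar>) \<le> sqrt (real p) * \<nu>g"
        using sum_abs_sqrt[of "\<lambda>i. G i xk s" p] nG by (meson mult_left_mono order.trans real_sqrt_ge_zero of_nat_0_le_iff)
      ultimately show ?thesis using sa by (smt (verit) mult_left_mono)
    qed
    finally show ?thesis by (simp add: algebra_simps)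
  qed
  have bw: "- inner w d \<le> \<kappa>f * norm d"
  proof -
    have "- inner w d \<le> \<bar>inner w d\<bar>" by simp
    also have "\<dots> \<le> norm w * norm d" by (rule Cauchy_Schwarz_ineq2)
    also have "\<dots> \<le> \<kappa>f * norm d" using nv0 by (intro mult_right_mono) (auto simp: w_def)
    finally show ?thesis .
  qed
  have kn: "\<kappa>g * norm d \<ge> 0" using kg by simp
  have "(\<kappa>g * norm d) * (\<Sum>i<p. \<bar>a i\<bar>) \<le> (\<kappa>g * norm d) * (sqrt (real p) * (vnorm p lam + \<sigma> * \<nu>g))"
    using suma kn by (rule mult_left_mono)
  then have main: "\<alpha> * (norm d * norm d) \<le> norm d * (\<kappa>f + sqrt (real p) * \<kappa>g * (vnorm p lam + \<sigma> * \<nu>g))"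
    using le0 Qge bnd1 bw unfolding N_def by (simp add: power2_eq_square algebra_simps)
  have nonneg: "0 \<le> \<kappa>f + sqrt (real p) * \<kappa>g * (vnorm p lam + \<sigma> * \<nu>g)"
  proof -
    have "0 \<le> \<kappa>f" using nv0 norm_ge_zero order.trans by blast
    moreover have "0 \<le> \<nu>g" using nG real_sqrt_ge_zero[OF sum_nonneg] order.trans by (meson zero_le_power2)
    moreover have "0 \<le> vnorm p lam" unfolding vnorm_def by (simp add: sum_nonneg)
    ultimately show ?thesis using kg sa by (simp add: mult_nonneg_nonneg)
  qed
  show ?thesis
  proof (cases "norm d = 0")
    case True then show ?thesis using nonneg by (simp add: d_def)
  next
    case False
    then have "norm d > 0" by simp
    moreover have "norm d * (\<alpha> * norm d) \<le> norm d * (\<kappa>f + sqrt (real p) * \<kappa>g * (vnorm p lam + \<sigma> * \<nu>g))"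
      using main by (simp add: algebra_simps)
    ultimately show ?thesis unfolding d_def[symmetric] by (meson mult_left_le_imp_le)
  qed
qed

lemma step_lam:
  assumes sa: "\<sigma> > 0" and i: "i < p" and nv: "norm (v i (fst st) s) \<le> \<kappa>g"
  shows "snd st i + \<sigma> * G i (fst st) s - \<sigma> * (\<kappa>g * norm (fst (slpmm_step C p \<sigma> \<alpha> F G v0 v st s) - fst st))
     \<le> snd (slpmm_step C p \<sigma> \<alpha> F G v0 v st s) i"
proof -
  define d where "d = fst (slpmm_step C p \<sigma> \<alpha> F G v0 v st s) - fst st"
  have "- inner (v i (fst st) s) d \<le> \<bar>inner (v i (fst st) s) d\<bar>" by simp
  also have "\<dots> \<le> norm (v i (fst st) s) * norm d" by (rule Cauchy_Schwarz_ineq2)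
  also have "\<dots> \<le> \<kappa>g * norm d" using nv by (intro mult_right_mono) auto
  finally have "- (\<kappa>g * norm d) \<le> inner (v i (fst st) s) d" by simp
  then have "\<sigma> * (- (\<kappa>g * norm d)) \<le> \<sigma> * inner (v i (fst st) s) d" using sa by (intro mult_left_mono) auto
  then show ?thesis unfolding step_snd d_def[symmetric] using i by (simp add: algebra_simps)
qed



lemma slpmm_cong: "(\<And>j. j < k \<Longrightarrow> xs j = ys j) \<Longrightarrow> slpmm C p \<sigma> \<alpha> F G v0 v x0 xs k = slpmm C p \<sigma> \<alpha> F G v0 v x0 ys k"
  by (induction k) auto

lemma iter_C: "compact C \<Longrightarrow> C \<noteq> {} \<Longrightarrow> x0 \<in> C \<Longrightarrow> fst (slpmm C p \<sigma> \<alpha> F G v0 v x0 xs k) \<in> C"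
  by (induction k) (auto intro: step_min[THEN conjunct1])

lemma meas_app:
  fixes H :: "'a::topological_space \<Rightarrow> 'b \<Rightarrow> 'c::topological_space"
  assumes "(\<lambda>(x,s). H x s) \<in> borel_measurable (borel \<Otimes>\<^sub>M N)" "f \<in> borel_measurable M'" "g \<in> measurable M' N"
  shows "(\<lambda>\<omega>. H (f \<omega>) (g \<omega>)) \<in> borel_measurable M'"
  using measurable_compose[OF measurable_Pair[OF assms(2,3)] assms(1)] by simp

lemma meas_iter:
  fixes C :: "'a::euclidean_space set" and ys :: "'m \<Rightarrow> nat \<Rightarrow> 'b"
    and F :: "'a \<Rightarrow> 'b \<Rightarrow> real" and G :: "nat \<Rightarrow> 'a \<Rightarrow> 'b \<Rightarrow> real"
    and v0 :: "'a \<Rightarrow> 'b \<Rightarrow> 'a" and v :: "nat \<Rightarrow> 'a \<Rightarrow> 'b \<Rightarrow> 'a"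
  assumes C: "compact C" "convex C" "C \<noteq> {}" and sa: "\<sigma> > 0" "\<alpha> > 0"
    and Fmeas: "(\<lambda>(x, s). F x s) \<in> borel_measurable (borel \<Otimes>\<^sub>M N)"
    and Gmeas: "\<And>i. i < p \<Longrightarrow> (\<lambda>(x, s). G i x s) \<in> borel_measurable (borel \<Otimes>\<^sub>M N)"
    and v0meas: "(\<lambda>(x, s). v0 x s) \<in> borel_measurable (borel \<Otimes>\<^sub>M N)"
    and vmeas: "\<And>i. i < p \<Longrightarrow> (\<lambda>(x, s). v i x s) \<in> borel_measurable (borel \<Otimes>\<^sub>M N)"
  shows "(\<And>j. j < k \<Longrightarrow> (\<lambda>\<omega>. ys \<omega> j) \<in> measurable M' N) \<Longrightarrow>
    (\<lambda>\<omega>. fst (slpmm C p \<sigma> \<alpha> F G v0 v x0 (ys \<omega>) k)) \<in> borel_measurable M' \<and>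
    (\<forall>i. (\<lambda>\<omega>. snd (slpmm C p \<sigma> \<alpha> F G v0 v x0 (ys \<omega>) k) i) \<in> borel_measurable M')"
proof (induction k)
  case 0 show ?case by simp
next
  case (Suc k)
  define st where "st \<omega> = slpmm C p \<sigma> \<alpha> F G v0 v x0 (ys \<omega>) k" for \<omega>
  have IH1[measurable]: "(\<lambda>\<omega>. fst (st \<omega>)) \<in> borel_measurable M'" using Suc by (auto simp: st_def)
  have IH2[measurable]: "\<And>i. (\<lambda>\<omega>. snd (st \<omega>) i) \<in> borel_measurable M'" using Suc by (auto simp: st_def)
  have yk: "(\<lambda>\<omega>. ys \<omega> k) \<in> measurable M' N" using Suc.prems by simp
  have Fm[measurable]: "(\<lambda>\<omega>. F (fst (st \<omega>)) (ys \<omega> k)) \<in> borel_measurable M'" by (rule meas_app[OF Fmeas IH1 yk])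
  have Gm: "\<And>i. i < p \<Longrightarrow> (\<lambda>\<omega>. G i (fst (st \<omega>)) (ys \<omega> k)) \<in> borel_measurable M'" by (rule meas_app[OF Gmeas IH1 yk])
  have v0m[measurable]: "(\<lambda>\<omega>. v0 (fst (st \<omega>)) (ys \<omega> k)) \<in> borel_measurable M'" by (rule meas_app[OF v0meas IH1 yk])
  have vm: "\<And>i. i < p \<Longrightarrow> (\<lambda>\<omega>. v i (fst (st \<omega>)) (ys \<omega> k)) \<in> borel_measurable M'" by (rule meas_app[OF vmeas IH1 yk])
  have vn[measurable]: "(\<lambda>\<omega>. vnorm p (snd (st \<omega>))) \<in> borel_measurable M'" unfolding vnorm_def by measurable
  define f where "f \<omega> y = obj p \<sigma> \<alpha> F G v0 v (fst (st \<omega>)) (ys \<omega> k) (snd (st \<omega>)) y" for \<omega> y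
  have fm: "(\<lambda>\<omega>. f \<omega> z) \<in> borel_measurable M'" for z
  proof -
    have sm[measurable]: "(\<lambda>\<omega>. \<Sum>i<p. (max (snd (st \<omega>) i + \<sigma> * (G i (fst (st \<omega>)) (ys \<omega> k) + inner (v i (fst (st \<omega>)) (ys \<omega> k)) (z - fst (st \<omega>)))) 0)^2) \<in> borel_measurable M'"
    proof (rule borel_measurable_sum)
      fix i assume "i \<in> {..<p}"
      then have [measurable]: "(\<lambda>\<omega>. G i (fst (st \<omega>)) (ys \<omega> k)) \<in> borel_measurable M'" "(\<lambda>\<omega>. v i (fst (st \<omega>)) (ys \<omega> k)) \<in> borel_measurable M'"
        using Gm vm by auto
      show "(\<lambda>\<omega>. (max (snd (st \<omega>) i + \<sigma> * (G i (fst (st \<omega>)) (ys \<omega> k) + inner (v i (fst (st \<omega>)) (ys \<omega> k)) (z - fst (st \<omega>)))) 0)^2) \<in> borel_measurable M'"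
        by measurable
    qed
    show ?thesis unfolding f_def obj_alt by measurable
  qed
  have eq: "fst (slpmm C p \<sigma> \<alpha> F G v0 v x0 (ys \<omega>) (Suc k)) = (SOME y. y \<in> C \<and> (\<forall>z\<in>C. f \<omega> y \<le> f \<omega> z))" for \<omega>
    by (simp add: step_fst f_def st_def)
  have xm[measurable]: "(\<lambda>\<omega>. fst (slpmm C p \<sigma> \<alpha> F G v0 v x0 (ys \<omega>) (Suc k))) \<in> borel_measurable M'"
    unfolding eq
  proof (rule argmin_measurable[OF C(1) C(3)])
    show "continuous_on C (f \<omega>)" for \<omega> unfolding f_def by (rule obj_cont)
    show "(\<lambda>\<omega>. f \<omega> z) \<in> borel_measurable M'" for z by (rule fm)
    show "y1 = y2" if "y1 \<in> C" "y2 \<in> C" "\<forall>z\<in>C. f \<omega> y1 \<le> f \<omega> z" "\<forall>z\<in>C. f \<omega> y2 \<le> f \<omega> z" for \<omega> y1 y2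
      using obj_uniq[OF sa C(2) that(1,2) that(3)[unfolded f_def] that(4)[unfolded f_def]] .
  qed
  have "(\<lambda>\<omega>. snd (slpmm C p \<sigma> \<alpha> F G v0 v x0 (ys \<omega>) (Suc k)) i) \<in> borel_measurable M'" for i
  proof (cases "i < p")
    case True
    then have [measurable]: "(\<lambda>\<omega>. G i (fst (st \<omega>)) (ys \<omega> k)) \<in> borel_measurable M'" "(\<lambda>\<omega>. v i (fst (st \<omega>)) (ys \<omega> k)) \<in> borel_measurable M'"
      using Gm vm by auto
    have [measurable]: "(\<lambda>\<omega>. fst (slpmm_step C p \<sigma> \<alpha> F G v0 v (st \<omega>) (ys \<omega> k))) \<in> borel_measurable M'"
      using xm by (simp add: st_def)
    have "snd (slpmm C p \<sigma> \<alpha> F G v0 v x0 (ys \<omega>) (Suc k)) i = max (snd (st \<omega>) i + \<sigma> * (G i (fst (st \<omega>)) (ys \<omega> k) + inner (v i (fst (st \<omega>)) (ys \<omega> k)) (fst (slpmm_step C p \<sigma> \<alpha> F G v0 v (st \<omega>) (ys \<omega> k)) - fst (st \<omega>)))) 0" for \<omega>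
      using True by (simp add: step_snd st_def)
    then show ?thesis by simp measurable
  next
    case False
    then show ?thesis unfolding slpmm.simps step_snd by simp
  qed
  then show ?case using xm by blast
qed



lemma pathwise:
  fixes C :: "'a::euclidean_space set" and xis :: "nat \<Rightarrow> 'b"
  assumes C: "compact C" "convex C" "C \<noteq> {}" and x0C: "x0 \<in> C" and sa: "\<sigma> > 0" "\<alpha> > 0"
    and kg: "\<kappa>g \<ge> 0" and i: "i < p" and xis: "\<And>k. xis k \<in> \<Xi>"
    and A2: "\<And>x s. x \<in> C \<Longrightarrow> s \<in> \<Xi> \<Longrightarrow> sqrt (\<Sum>i<p. (G i x s)^2) \<le> \<nu>g"
    and A3a: "\<And>x s. x \<in> C \<Longrightarrow> s \<in> \<Xi> \<Longrightarrow> norm (v0 x s) \<le> \<kappa>f"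
    and A3b: "\<And>i x s. i < p \<Longrightarrow> x \<in> C \<Longrightarrow> s \<in> \<Xi> \<Longrightarrow> norm (v i x s) \<le> \<kappa>g"
    and K: "K \<ge> 1"
  shows "(1 / real K) * (\<Sum>k<K. G i (fst (slpmm C p \<sigma> \<alpha> F G v0 v x0 xis k)) (xis k))
    \<le> 1 / (\<sigma> * real K) * snd (slpmm C p \<sigma> \<alpha> F G v0 v x0 xis K) i
      + \<kappa>g / \<alpha> * (\<kappa>f + sqrt (real p) * \<nu>g * \<kappa>g * \<sigma>)
      + sqrt (real p) * \<kappa>g^2 / (\<alpha> * real K) * (\<Sum>k<K. vnorm p (snd (slpmm C p \<sigma> \<alpha> F G v0 v x0 xis k)))"
proof -
  define S where "S k = slpmm C p \<sigma> \<alpha> F G v0 v x0 xis k" for k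
  define X where "X k = fst (S k)" for k
  define L where "L k = snd (S k)" for k
  define D where "D k = norm (X (Suc k) - X k)" for k
  define c1 where "c1 = \<kappa>g / \<alpha> * (\<kappa>f + sqrt (real p) * \<nu>g * \<kappa>g * \<sigma>)"
  define c2 where "c2 = sqrt (real p) * \<kappa>g^2 / \<alpha>"
  have XC: "X k \<in> C" for k unfolding X_def S_def using iter_C[OF C(1,3) x0C] .
  have XS: "X (Suc k) = fst (slpmm_step C p \<sigma> \<alpha> F G v0 v (S k) (xis k))" for k
    by (simp add: X_def S_def)
  have LS: "L (Suc k) = snd (slpmm_step C p \<sigma> \<alpha> F G v0 v (S k) (xis k))" for k
    by (simp add: L_def S_def)
  have Db: "\<kappa>g * D k \<le> c1 + c2 * vnorm p (L k)" for k
  proof -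
    have minS: "\<forall>z\<in>C. obj p \<sigma> \<alpha> F G v0 v (X k) (xis k) (L k) (X (Suc k)) \<le> obj p \<sigma> \<alpha> F G v0 v (X k) (xis k) (L k) z"
      using step_min[OF C(1,3), of p \<sigma> \<alpha> F G v0 v "S k" "xis k"] unfolding XS[unfolded X_def] X_def L_def by blast
    have "\<alpha> * D k \<le> \<kappa>f + sqrt (real p) * \<kappa>g * (vnorm p (L k) + \<sigma> * \<nu>g)"
      unfolding D_def
      by (rule step_bound[OF C(2) XC XC minS sa A3a[OF XC xis] A3b[OF _ XC xis] A2[OF XC xis] kg])
    then have "(\<kappa>g / \<alpha>) * (\<alpha> * D k) \<le> (\<kappa>g / \<alpha>) * (\<kappa>f + sqrt (real p) * \<kappa>g * (vnorm p (L k) + \<sigma> * \<nu>g))"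
      using kg sa by (intro mult_left_mono) auto
    then show ?thesis using sa by (simp add: c1_def c2_def field_simps power2_eq_square)
  qed
  have Lb: "L k i + \<sigma> * G i (X k) (xis k) - \<sigma> * (\<kappa>g * D k) \<le> L (Suc k) i" for k
    unfolding LS D_def XS X_def L_def
    using step_lam[where \<sigma>=\<sigma> and i=i and p=p and v=v and st="S k" and s="xis k" and \<kappa>g=\<kappa>g and C=C and \<alpha>=\<alpha> and F=F and G=G and ?v0.0=v0]
      sa(1) i A3b[OF i XC[unfolded X_def] xis, of k k] unfolding S_def slpmm.simps(2) by blast
  have tel: "\<sigma> * (\<Sum>k<n. G i (X k) (xis k)) - \<sigma> * (\<Sum>k<n. \<kappa>g * D k) \<le> L n i" for n
  proof (induction n)
    case 0 then show ?case by (simp add: L_def S_def)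
  next
    case (Suc n)
    then show ?case using Lb[of n] by (simp add: algebra_simps)
  qed
  have "\<sigma> * (\<Sum>k<K. G i (X k) (xis k)) \<le> L K i + \<sigma> * (\<Sum>k<K. \<kappa>g * D k)" using tel[of K] by simp
  also have "(\<Sum>k<K. \<kappa>g * D k) \<le> (\<Sum>k<K. c1 + c2 * vnorm p (L k))" by (intro sum_mono Db)
  also have "\<dots> = real K * c1 + c2 * (\<Sum>k<K. vnorm p (L k))" by (simp add: sum.distrib sum_distrib_left)
  finally have "\<sigma> * (\<Sum>k<K. G i (X k) (xis k)) \<le> L K i + \<sigma> * (real K * c1 + c2 * (\<Sum>k<K. vnorm p (L k)))"
    using sa by simp
  then have "(\<Sum>k<K. G i (X k) (xis k)) \<le> L K i / \<sigma> + (real K * c1 + c2 * (\<Sum>k<K. vnorm p (L k)))"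
    using sa by (simp add: field_simps)
  then have "(1 / real K) * (\<Sum>k<K. G i (X k) (xis k)) \<le> (1 / real K) * (L K i / \<sigma> + (real K * c1 + c2 * (\<Sum>k<K. vnorm p (L k))))"
    using K by (intro mult_left_mono) auto
  also have "\<dots> = 1 / (\<sigma> * real K) * L K i + c1 + c2 / real K * (\<Sum>k<K. vnorm p (L k))"
    using K sa by (simp add: field_simps)
  finally show ?thesis by (simp add: X_def L_def S_def c1_def c2_def)
qed



theorem lemma7:
  fixes M :: "'w measure" and N :: "'b measure" and \<xi> :: "nat \<Rightarrow> 'w \<Rightarrow> 'b"
    and \<Xi> :: "'b set" and C :: "'a::euclidean_space set"
    and F :: "'a \<Rightarrow> 'b \<Rightarrow> real" and G :: "nat \<Rightarrow> 'a \<Rightarrow> 'b \<Rightarrow> real"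
    and v0 :: "'a \<Rightarrow> 'b \<Rightarrow> 'a" and v :: "nat \<Rightarrow> 'a \<Rightarrow> 'b \<Rightarrow> 'a"
    and p K :: nat and \<sigma> \<alpha> R \<nu>g \<kappa>f \<kappa>g :: real and x0 :: 'a
  assumes M: "prob_space M"
    and iid: "prob_space.indep_vars M (\<lambda>_. N) \<xi> UNIV"
      "\<And>k. distr M N (\<xi> k) = distr M N (\<xi> 0)"
    and supp: "\<And>k. AE \<omega> in M. \<xi> k \<omega> \<in> \<Xi>"
    and C: "compact C" "convex C" "C \<noteq> {}"
    and Fcvx: "\<And>s. s \<in> \<Xi> \<Longrightarrow> convex_on C (\<lambda>x. F x s) \<and> continuous_on C (\<lambda>x. F x s)"
    and Gcvx: "\<And>i s. i < p \<Longrightarrow> s \<in> \<Xi> \<Longrightarrow> convex_on C (\<lambda>x. G i x s) \<and> continuous_on C (\<lambda>x. G i x s)"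
    and Fmeas: "(\<lambda>(x, s). F x s) \<in> borel_measurable (borel \<Otimes>\<^sub>M N)"
    and Gmeas: "\<And>i. i < p \<Longrightarrow> (\<lambda>(x, s). G i x s) \<in> borel_measurable (borel \<Otimes>\<^sub>M N)"
    and v0meas: "(\<lambda>(x, s). v0 x s) \<in> borel_measurable (borel \<Otimes>\<^sub>M N)"
    and vmeas: "\<And>i. i < p \<Longrightarrow> (\<lambda>(x, s). v i x s) \<in> borel_measurable (borel \<Otimes>\<^sub>M N)"
    and ffin: "\<And>x. x \<in> C \<Longrightarrow> integrable M (\<lambda>\<omega>. F x (\<xi> 0 \<omega>))"
    and gfin: "\<And>i x. i < p \<Longrightarrow> x \<in> C \<Longrightarrow> integrable M (\<lambda>\<omega>. G i x (\<xi> 0 \<omega>))"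
    and v0sub: "\<And>x s. x \<in> C \<Longrightarrow> s \<in> \<Xi> \<Longrightarrow> subgrad_on C (\<lambda>y. F y s) x (v0 x s)"
    and vsub: "\<And>i x s. i < p \<Longrightarrow> x \<in> C \<Longrightarrow> s \<in> \<Xi> \<Longrightarrow> subgrad_on C (\<lambda>y. G i y s) x (v i x s)"
    and A1: "\<And>x y. x \<in> C \<Longrightarrow> y \<in> C \<Longrightarrow> norm (x - y) \<le> R"
    and A2: "\<And>x s. x \<in> C \<Longrightarrow> s \<in> \<Xi> \<Longrightarrow> sqrt (\<Sum>i<p. (G i x s)^2) \<le> \<nu>g"
    and A3: "\<And>x s. x \<in> C \<Longrightarrow> s \<in> \<Xi> \<Longrightarrow> norm (v0 x s) \<le> \<kappa>f"
      "\<And>i x s. i < p \<Longrightarrow> x \<in> C \<Longrightarrow> s \<in> \<Xi> \<Longrightarrow> norm (v i x s) \<le> \<kappa>g"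
    and par: "\<sigma> > 0" "\<alpha> > 0" "2 * \<alpha> - real p * \<kappa>g^2 * \<sigma> > 0" "x0 \<in> C"
    and K: "K \<ge> 1"
  shows "\<forall>i<p.
    (\<integral>\<omega>. (\<integral>\<omega>'. G i ((1 / real K) *\<^sub>R (\<Sum>k<K. fst (slpmm C p \<sigma> \<alpha> F G v0 v x0 (\<lambda>j. \<xi> j \<omega>) k))) (\<xi> 0 \<omega>') \<partial>M) \<partial>M)
    \<le> 1 / (\<sigma> * real K) * (\<integral>\<omega>. snd (slpmm C p \<sigma> \<alpha> F G v0 v x0 (\<lambda>j. \<xi> j \<omega>) K) i \<partial>M)
      + \<kappa>g / \<alpha> * (\<kappa>f + sqrt (real p) * \<nu>g * \<kappa>g * \<sigma>)
      + sqrt (real p) * \<kappa>g^2 / (\<alpha> * real K) *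
          (\<Sum>k<K. (\<integral>\<omega>. vnorm p (snd (slpmm C p \<sigma> \<alpha> F G v0 v x0 (\<lambda>j. \<xi> j \<omega>) k)) \<partial>M))"
proof (intro allI impI)
  fix i assume i: "i < p"
  interpret P: prob_space M by (rule M)
  have \<xi>m[measurable]: "\<xi> k \<in> measurable M N" for k
    using iid(1) unfolding P.indep_vars_def by auto
  have AE\<Xi>: "AE \<omega> in M. \<forall>k. \<xi> k \<omega> \<in> \<Xi>" using supp by (simp add: AE_all_countable)
  have \<Xi>ne: "\<Xi> \<noteq> {}"
  proof
    assume "\<Xi> = {}"
    then have "AE \<omega> in M. False" using supp[of 0] by simp
    then show False by (simp add: P.AE_False)
  qed
  then obtain s0 where s0: "s0 \<in> \<Xi>" by blast
  have kg: "\<kappa>g \<ge> 0" using A3(2)[OF i par(4) s0] norm_ge_zero order.trans by blast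
  define S where "S \<omega> k = slpmm C p \<sigma> \<alpha> F G v0 v x0 (\<lambda>j. \<xi> j \<omega>) k" for \<omega> k
  define X where "X k \<omega> = fst (S \<omega> k)" for k \<omega>
  define L where "L k \<omega> = snd (S \<omega> k)" for k \<omega>
  define g where "g x = (\<integral>\<omega>'. G i x (\<xi> 0 \<omega>') \<partial>M)" for x
  define xbar where "xbar \<omega> = (1 / real K) *\<^sub>R (\<Sum>k<K. X k \<omega>)" for \<omega>
  define c1 where "c1 = \<kappa>g / \<alpha> * (\<kappa>f + sqrt (real p) * \<nu>g * \<kappa>g * \<sigma>)"
  define c2 where "c2 = sqrt (real p) * \<kappa>g^2 / (\<alpha> * real K)"
  have XC: "X k \<omega> \<in> C" for k \<omega> unfolding X_def S_def by (rule iter_C[OF C(1,3) par(4)])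
  have mi: "(\<lambda>\<omega>. fst (slpmm C p \<sigma> \<alpha> F G v0 v x0 (\<lambda>j. \<xi> j \<omega>) k)) \<in> borel_measurable M \<and>
    (\<forall>i. (\<lambda>\<omega>. snd (slpmm C p \<sigma> \<alpha> F G v0 v x0 (\<lambda>j. \<xi> j \<omega>) k) i) \<in> borel_measurable M)" for k
    by (rule meas_iter[OF C(1,2,3) par(1,2) Fmeas Gmeas v0meas vmeas]) (use \<xi>m in auto)
  have Xm[measurable]: "X k \<in> borel_measurable M" for k using mi[of k] by (simp add: X_def[abs_def] S_def)
  have Lm[measurable]: "(\<lambda>\<omega>. L k \<omega> j) \<in> borel_measurable M" for k j using mi[of k] by (simp add: L_def S_def)
  have Gm: "(\<lambda>(x, s). G i x s) \<in> borel_measurable (borel \<Otimes>\<^sub>M N)" using Gmeas[OF i] .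
  have gm[measurable]: "g \<in> borel_measurable borel"
  proof -
    have "(\<lambda>z. G i (fst z) (\<xi> 0 (snd z))) \<in> borel_measurable (borel \<Otimes>\<^sub>M M)"
      by (rule meas_app[OF Gm measurable_fst measurable_compose[OF measurable_snd \<xi>m]])
    then have "case_prod (\<lambda>x \<omega>'. G i x (\<xi> 0 \<omega>')) \<in> borel_measurable (borel \<Otimes>\<^sub>M M)"
      by (simp add: case_prod_beta')
    then show ?thesis unfolding g_def by (rule P.borel_measurable_lebesgue_integral)
  qed
  have Gbj: "\<bar>G j x s\<bar> \<le> \<nu>g" if "j < p" "x \<in> C" "s \<in> \<Xi>" for j x s
  proof -
    have "\<bar>G j x s\<bar> = sqrt ((G j x s)^2)" by simp
    also have "\<dots> \<le> sqrt (\<Sum>j<p. (G j x s)^2)"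
      using that(1) by (intro real_sqrt_le_mono member_le_sum) auto
    also have "\<dots> \<le> \<nu>g" using A2 that(2,3) by blast
    finally show ?thesis .
  qed
  have Gb: "\<bar>G i x s\<bar> \<le> \<nu>g" if "x \<in> C" "s \<in> \<Xi>" for x s using Gbj[OF i that] .
  have gint: "integrable M (\<lambda>\<omega>'. G i x (\<xi> 0 \<omega>'))" if "x \<in> C" for x using gfin[OF i that] .
  have gb: "\<bar>g x\<bar> \<le> \<nu>g" if x: "x \<in> C" for x
  proof -
    have AEb: "AE \<omega> in M. \<bar>G i x (\<xi> 0 \<omega>)\<bar> \<le> \<nu>g" using supp[of 0] by eventually_elim (use Gb x in blast)
    have "g x \<le> (\<integral>\<omega>. \<nu>g \<partial>M)" unfolding g_def
      using AEb by (intro integral_mono_AE gint x) (auto elim: AE_mp)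
    moreover have "(\<integral>\<omega>. - \<nu>g \<partial>M) \<le> g x" unfolding g_def
      using AEb by (intro integral_mono_AE gint x) (auto elim: AE_mp)
    ultimately show ?thesis by (simp add: P.prob_space)
  qed
  have gconv: "convex_on C g"
    unfolding convex_on_def
  proof (intro conjI C(2) ballI allI impI)
    fix x y and u w :: real assume xy: "x \<in> C" "y \<in> C" and uw: "0 \<le> u" "0 \<le> w" "u + w = 1"
    have uC: "u *\<^sub>R x + w *\<^sub>R y \<in> C" using C(2) xy uw unfolding convex_def by blast
    have AEc: "AE \<omega> in M. G i (u *\<^sub>R x + w *\<^sub>R y) (\<xi> 0 \<omega>) \<le> u * G i x (\<xi> 0 \<omega>) + w * G i y (\<xi> 0 \<omega>)"
      using supp[of 0] by eventually_elim (use Gcvx[OF i] xy uw in \<open>auto simp: convex_on_def\<close>)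
    have "g (u *\<^sub>R x + w *\<^sub>R y) \<le> (\<integral>\<omega>. u * G i x (\<xi> 0 \<omega>) + w * G i y (\<xi> 0 \<omega>) \<partial>M)" unfolding g_def
    proof (rule integral_mono_AE[OF gint[OF uC] _ AEc])
      show "integrable M (\<lambda>\<omega>. u * G i x (\<xi> 0 \<omega>) + w * G i y (\<xi> 0 \<omega>))"
        using Bochner_Integration.integrable_add[OF integrable_mult_right[OF gint[OF xy(1)]] integrable_mult_right[OF gint[OF xy(2)]]] by simp
    qed
    also have "\<dots> = u * g x + w * g y" unfolding g_def
      by (simp add: Bochner_Integration.integral_add[OF integrable_mult_right[OF gint[OF xy(1)]] integrable_mult_right[OF gint[OF xy(2)]]])
    finally show "g (u *\<^sub>R x + w *\<^sub>R y) \<le> u * g x + w * g y" .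
  qed
  have Kpos: "real K > 0" using K by simp
  have sumK: "(\<Sum>k<K. 1 / real K) = (1::real)" using Kpos by simp
  have Kne: "{..<K} \<noteq> {}" using K by (simp add: lessThan_empty_iff)
  have xbar_eq: "xbar \<omega> = (\<Sum>k<K. (1 / real K) *\<^sub>R X k \<omega>)" for \<omega> by (simp add: xbar_def scaleR_sum_right)
  have xbarC: "xbar \<omega> \<in> C" for \<omega>
    unfolding xbar_eq by (rule convex_sum[OF _ C(2) sumK]) (auto simp: XC)
  have jensen: "g (xbar \<omega>) \<le> (1 / real K) * (\<Sum>k<K. g (X k \<omega>))" for \<omega>
  proof -
    have "g (xbar \<omega>) \<le> (\<Sum>k<K. (1 / real K) * g (X k \<omega>))"
      unfolding xbar_eq by (rule convex_on_sum[OF _ Kne gconv sumK]) (auto simp: XC)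
    then show ?thesis by (simp add: sum_distrib_left)
  qed
  have xbarm[measurable]: "xbar \<in> borel_measurable M" unfolding xbar_def by measurable
  have int1: "integrable M (\<lambda>\<omega>. g (xbar \<omega>))"
    by (rule P.integrable_const_bound[where B=\<nu>g]) (auto simp: gb xbarC)
  have int2: "integrable M (\<lambda>\<omega>. g (X k \<omega>))" for k
    by (rule P.integrable_const_bound[where B=\<nu>g]) (auto simp: gb XC)
  have GXm: "(\<lambda>\<omega>. G i (X k \<omega>) (\<xi> k \<omega>)) \<in> borel_measurable M" for k
    by (rule meas_app[OF Gm Xm \<xi>m])
  have int3: "integrable M (\<lambda>\<omega>. G i (X k \<omega>) (\<xi> k \<omega>))" for k
  proof (rule P.integrable_const_bound[where B=\<nu>g])
    show "AE \<omega> in M. norm (G i (X k \<omega>) (\<xi> k \<omega>)) \<le> \<nu>g"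
      using AE\<Xi> by eventually_elim (auto intro: Gb XC)
  qed (rule GXm)
  have \<nu>g0: "\<nu>g \<ge> 0" using Gb[OF par(4) s0] by linarith
  have R0: "R \<ge> 0" using A1[OF par(4) par(4)] by simp
  define B where "B = \<sigma> * (\<nu>g + \<kappa>g * R)"
  have B0: "B \<ge> 0" using par(1) \<nu>g0 kg R0 by (simp add: B_def)
  have Lb: "AE \<omega> in M. \<forall>k j. \<bar>L k \<omega> j\<bar> \<le> real k * B"
    using AE\<Xi>
  proof eventually_elim
    case (elim \<omega>)
    show ?case
    proof (rule allI)
      fix k show "\<forall>j. \<bar>L k \<omega> j\<bar> \<le> real k * B"
      proof (induction k)
        case 0 show ?case by (simp add: L_def S_def)
      next
        case (Suc k)
        show ?case
        proof
          fix j
          show "\<bar>L (Suc k) \<omega> j\<bar> \<le> real (Suc k) * B"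
          proof (cases "j < p")
            case True
            define a where "a = L k \<omega> j + \<sigma> * (G j (X k \<omega>) (\<xi> k \<omega>) + inner (v j (X k \<omega>) (\<xi> k \<omega>)) (X (Suc k) \<omega> - X k \<omega>))"
            have eq: "L (Suc k) \<omega> j = max a 0" using True by (simp add: a_def L_def X_def S_def step_snd)
            have g1: "\<bar>G j (X k \<omega>) (\<xi> k \<omega>)\<bar> \<le> \<nu>g" using Gbj[OF True XC] elim by blast
            have "\<bar>inner (v j (X k \<omega>) (\<xi> k \<omega>)) (X (Suc k) \<omega> - X k \<omega>)\<bar> \<le> norm (v j (X k \<omega>) (\<xi> k \<omega>)) * norm (X (Suc k) \<omega> - X k \<omega>)"
              by (rule Cauchy_Schwarz_ineq2)
            also have "\<dots> \<le> \<kappa>g * R" using A3(2)[OF True XC] elim A1[OF XC XC] kg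
              by (intro mult_mono) auto
            finally have g2: "\<bar>inner (v j (X k \<omega>) (\<xi> k \<omega>)) (X (Suc k) \<omega> - X k \<omega>)\<bar> \<le> \<kappa>g * R" .
            define GG where "GG = G j (X k \<omega>) (\<xi> k \<omega>)"
            define II where "II = inner (v j (X k \<omega>) (\<xi> k \<omega>)) (X (Suc k) \<omega> - X k \<omega>)"
            have t1: "\<bar>a\<bar> \<le> \<bar>L k \<omega> j\<bar> + \<bar>\<sigma> * (GG + II)\<bar>" unfolding a_def GG_def II_def by (rule abs_triangle_ineq)
            have t2: "\<bar>\<sigma> * (GG + II)\<bar> \<le> B"
            proof -
              have "\<bar>GG + II\<bar> \<le> \<nu>g + \<kappa>g * R" using abs_triangle_ineq[of GG II] g1 g2 unfolding GG_def II_def by linarith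
              then have "\<sigma> * \<bar>GG + II\<bar> \<le> \<sigma> * (\<nu>g + \<kappa>g * R)" using par(1) by (intro mult_left_mono) auto
              then show ?thesis using par(1) by (simp add: abs_mult B_def)
            qed
            have t3: "\<bar>L k \<omega> j\<bar> \<le> real k * B" using Suc.IH by blast
            have "real (Suc k) * B = real k * B + B" by (simp add: algebra_simps)
            then have "\<bar>a\<bar> \<le> real (Suc k) * B" using t1 t2 t3 by linarith
            then show ?thesis unfolding eq by (auto simp: max_def abs_if split: if_splits)
          next
            case False
            then have "L (Suc k) \<omega> j = 0" by (simp add: L_def S_def step_snd)
            then show ?thesis using B0 by simp
          qed
        qed
      qed
    qed
  qed
  have int4: "integrable M (\<lambda>\<omega>. L k \<omega> j)" for k j
  proof (rule P.integrable_const_bound[where B="real k * B"])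
    show "AE \<omega> in M. norm (L k \<omega> j) \<le> real k * B" using Lb by eventually_elim auto
  qed simp
  have vnm[measurable]: "(\<lambda>\<omega>. vnorm p (L k \<omega>)) \<in> borel_measurable M" for k unfolding vnorm_def by measurable
  have int5: "integrable M (\<lambda>\<omega>. vnorm p (L k \<omega>))" for k
  proof (rule P.integrable_const_bound[where B="sqrt (real p * (real k * B)^2)"])
    show "AE \<omega> in M. norm (vnorm p (L k \<omega>)) \<le> sqrt (real p * (real k * B)^2)"
      using Lb
    proof eventually_elim
      case (elim \<omega>)
      have "(\<Sum>j<p. (L k \<omega> j)^2) \<le> (\<Sum>j<p. (real k * B)^2)"
      proof (intro sum_mono)
        fix j
        have "\<bar>L k \<omega> j\<bar>^2 \<le> (real k * B)^2" using elim by (intro power_mono) auto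
        then show "(L k \<omega> j)^2 \<le> (real k * B)^2" by simp
      qed
      then have "vnorm p (L k \<omega>) \<le> sqrt (real p * (real k * B)^2)" unfolding vnorm_def
        by (intro real_sqrt_le_mono) simp
      moreover have "vnorm p (L k \<omega>) \<ge> 0" unfolding vnorm_def by (simp add: sum_nonneg)
      ultimately show ?case by simp
    qed
  qed simp
  have ind_eq: "(\<integral>\<omega>. G i (X k \<omega>) (\<xi> k \<omega>) \<partial>M) = (\<integral>\<omega>. g (X k \<omega>) \<partial>M)" for k
  proof -
    define PI where "PI = PiM {..<k} (\<lambda>_. N)"
    define Y where "Y \<omega> = restrict (\<lambda>j. \<xi> j \<omega>) {..<k}" for \<omega>
    have ind1: "P.indep_var PI Y (PiM {k} (\<lambda>_. N)) (\<lambda>\<omega>. restrict (\<lambda>j. \<xi> j \<omega>) {k})"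
      unfolding PI_def Y_def[abs_def] by (rule P.indep_var_restrict[OF iid(1)]) auto
    define PK where "PK = PiM {k} (\<lambda>_. N)"
    define Z where "Z \<omega> = restrict (\<lambda>j. \<xi> j \<omega>) {k}" for \<omega>
    have ind: "P.indep_var PI Y PK Z" using ind1 unfolding PK_def Z_def[abs_def] .
    define \<Phi> where "\<Phi> y = fst (slpmm C p \<sigma> \<alpha> F G v0 v x0 y k)" for y
    have \<Phi>m: "\<Phi> \<in> borel_measurable PI"
    proof -
      have "(\<lambda>y. fst (slpmm C p \<sigma> \<alpha> F G v0 v x0 ((\<lambda>y. y) y) k)) \<in> borel_measurable PI"
        using meas_iter[OF C(1,2,3) par(1,2) Fmeas Gmeas v0meas vmeas, where ys="\<lambda>y. y" and M'=PI and k=k]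
        unfolding PI_def by (auto intro: measurable_component_singleton)
      then show ?thesis unfolding \<Phi>_def[abs_def] by simp
    qed
    have X\<Phi>: "X k \<omega> = \<Phi> (Y \<omega>)" for \<omega>
      unfolding X_def S_def \<Phi>_def Y_def by (rule arg_cong[where f=fst], rule slpmm_cong) simp
    have Ym[measurable]: "Y \<in> measurable M PI" using P.indep_var_rv1[OF ind] .
    have Zm[measurable]: "Z \<in> measurable M PK" using P.indep_var_rv2[OF ind] .
    have ck: "(\<lambda>z. z k) \<in> measurable PK N" unfolding PK_def by (rule measurable_component_singleton) simp
    have Zk: "Z \<omega> k = \<xi> k \<omega>" for \<omega> by (simp add: Z_def)
    have hm: "(\<lambda>(y, z). G i (\<Phi> y) (z k)) \<in> borel_measurable (PI \<Otimes>\<^sub>M PK)"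
    proof -
      have "(\<lambda>q. G i (\<Phi> (fst q)) (snd q k)) \<in> borel_measurable (PI \<Otimes>\<^sub>M PK)"
        by (rule meas_app[OF Gm measurable_compose[OF measurable_fst \<Phi>m] measurable_compose[OF measurable_snd ck]])
      then show ?thesis by (simp add: case_prod_beta')
    qed
    have dist: "distr M PI Y \<Otimes>\<^sub>M distr M PK Z = distr M (PI \<Otimes>\<^sub>M PK) (\<lambda>\<omega>. (Y \<omega>, Z \<omega>))"
      using conjunct2[OF conjunct2[OF P.indep_var_distribution_eq[THEN iffD1, OF ind]]] .
    interpret PY: prob_space "distr M PI Y" by (rule P.prob_space_distr[OF Ym])
    interpret PZ: prob_space "distr M PK Z" by (rule P.prob_space_distr[OF Zm])
    interpret PYZ: pair_prob_space "distr M PI Y" "distr M PK Z" ..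
    have YZm: "(\<lambda>\<omega>. (Y \<omega>, Z \<omega>)) \<in> measurable M (PI \<Otimes>\<^sub>M PK)" using Ym Zm by (rule measurable_Pair)
    have hint: "integrable (distr M PI Y \<Otimes>\<^sub>M distr M PK Z) (\<lambda>(y, z). G i (\<Phi> y) (z k))"
      unfolding dist integrable_distr_eq[OF YZm hm] using int3[of k] by (simp add: X\<Phi> Zk)
    have "(\<integral>\<omega>. G i (X k \<omega>) (\<xi> k \<omega>) \<partial>M) = (\<integral>\<omega>. (\<lambda>(y, z). G i (\<Phi> y) (z k)) (Y \<omega>, Z \<omega>) \<partial>M)"
      by (simp add: X\<Phi> Zk)
    also have "\<dots> = integral\<^sup>L (distr M (PI \<Otimes>\<^sub>M PK) (\<lambda>\<omega>. (Y \<omega>, Z \<omega>))) (\<lambda>(y, z). G i (\<Phi> y) (z k))"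
      by (rule integral_distr[OF YZm hm, symmetric])
    also have "\<dots> = integral\<^sup>L (distr M PI Y \<Otimes>\<^sub>M distr M PK Z) (\<lambda>(y, z). G i (\<Phi> y) (z k))"
      by (simp add: dist)
    also have "\<dots> = (\<integral>y. (\<integral>z. G i (\<Phi> y) (z k) \<partial>distr M PK Z) \<partial>distr M PI Y)"
      using PYZ.integral_fst'[OF hint] by simp
    also have "\<dots> = (\<integral>y. g (\<Phi> y) \<partial>distr M PI Y)"
    proof (rule Bochner_Integration.integral_cong[OF refl])
      fix y
      have zm: "(\<lambda>z. G i (\<Phi> y) z) \<in> borel_measurable N"
        using meas_app[OF Gm borel_measurable_const[of "\<Phi> y"] measurable_id] by simp
      have zm2: "(\<lambda>z. G i (\<Phi> y) (z k)) \<in> borel_measurable PK"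
        by (rule measurable_compose[OF ck zm])
      have "(\<integral>z. G i (\<Phi> y) (z k) \<partial>distr M PK Z) = (\<integral>\<omega>. G i (\<Phi> y) (\<xi> k \<omega>) \<partial>M)"
        using integral_distr[OF Zm zm2] by (simp add: Zk)
      also have "\<dots> = (\<integral>z. G i (\<Phi> y) z \<partial>distr M N (\<xi> k))"
        by (rule integral_distr[OF \<xi>m zm, symmetric])
      also have "\<dots> = g (\<Phi> y)"
        unfolding iid(2)[of k] g_def by (rule integral_distr[OF \<xi>m zm])
      finally show "(\<integral>z. G i (\<Phi> y) (z k) \<partial>distr M PK Z) = g (\<Phi> y)" .
    qed
    also have "\<dots> = (\<integral>\<omega>. g (\<Phi> (Y \<omega>)) \<partial>M)"
      by (rule integral_distr[OF Ym measurable_compose[OF \<Phi>m gm]])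
    also have "\<dots> = (\<integral>\<omega>. g (X k \<omega>) \<partial>M)" by (simp add: X\<Phi>)
    finally show ?thesis .
  qed
  have pw: "AE \<omega> in M. (1 / real K) * (\<Sum>k<K. G i (X k \<omega>) (\<xi> k \<omega>))
      \<le> 1 / (\<sigma> * real K) * L K \<omega> i + c1 + c2 * (\<Sum>k<K. vnorm p (L k \<omega>))"
    using AE\<Xi>
  proof eventually_elim
    case (elim \<omega>)
    show ?case
      using pathwise[where xis="\<lambda>j. \<xi> j \<omega>" and \<Xi>=\<Xi> and G=G and v=v and ?v0.0=v0 and F=F and ?x0.0=x0 and \<nu>g=\<nu>g and \<kappa>f=\<kappa>f and \<kappa>g=\<kappa>g and K=K and i=i and p=p and \<sigma>=\<sigma> and \<alpha>=\<alpha> and C=C, OF C par(4) par(1,2) kg i _ A2 A3(1) A3(2) K] elim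
      by (simp add: X_def L_def S_def c1_def c2_def)
  qed
  have iA: "integrable M (\<lambda>\<omega>. 1 / (\<sigma> * real K) * L K \<omega> i)" using int4 by simp
  have iC: "integrable M (\<lambda>\<omega>. c2 * (\<Sum>k<K. vnorm p (L k \<omega>)))"
    using int5 by (intro integrable_mult_right Bochner_Integration.integrable_sum) auto
  have iAB: "integrable M (\<lambda>\<omega>. 1 / (\<sigma> * real K) * L K \<omega> i + c1)"
    by (rule Bochner_Integration.integrable_add[OF iA]) simp
  have "(\<integral>\<omega>. g (xbar \<omega>) \<partial>M) \<le> (\<integral>\<omega>. (1 / real K) * (\<Sum>k<K. g (X k \<omega>)) \<partial>M)"
    by (rule integral_mono[OF int1 _ jensen]) (use int2 in auto)
  also have "\<dots> = (1 / real K) * (\<Sum>k<K. (\<integral>\<omega>. g (X k \<omega>) \<partial>M))"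
    by (simp add: Bochner_Integration.integral_sum int2)
  also have "\<dots> = (1 / real K) * (\<Sum>k<K. (\<integral>\<omega>. G i (X k \<omega>) (\<xi> k \<omega>) \<partial>M))"
    by (simp add: ind_eq)
  also have "\<dots> = (\<integral>\<omega>. (1 / real K) * (\<Sum>k<K. G i (X k \<omega>) (\<xi> k \<omega>)) \<partial>M)"
    by (simp add: Bochner_Integration.integral_sum int3)
  also have "\<dots> \<le> (\<integral>\<omega>. 1 / (\<sigma> * real K) * L K \<omega> i + c1 + c2 * (\<Sum>k<K. vnorm p (L k \<omega>)) \<partial>M)"
  proof (rule integral_mono_AE[OF _ _ pw])
    show "integrable M (\<lambda>\<omega>. (1 / real K) * (\<Sum>k<K. G i (X k \<omega>) (\<xi> k \<omega>)))"
      using int3 by (intro integrable_mult_right Bochner_Integration.integrable_sum) auto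
    show "integrable M (\<lambda>\<omega>. 1 / (\<sigma> * real K) * L K \<omega> i + c1 + c2 * (\<Sum>k<K. vnorm p (L k \<omega>)))"
      by (rule Bochner_Integration.integrable_add[OF iAB iC])
  qed
  also have "\<dots> = (\<integral>\<omega>. 1 / (\<sigma> * real K) * L K \<omega> i + c1 \<partial>M) + (\<integral>\<omega>. c2 * (\<Sum>k<K. vnorm p (L k \<omega>)) \<partial>M)"
    by (rule Bochner_Integration.integral_add[OF iAB iC])
  also have "(\<integral>\<omega>. 1 / (\<sigma> * real K) * L K \<omega> i + c1 \<partial>M) = 1 / (\<sigma> * real K) * (\<integral>\<omega>. L K \<omega> i \<partial>M) + c1"
    by (subst Bochner_Integration.integral_add[OF iA]) (simp_all add: P.prob_space)
  also have "(\<integral>\<omega>. c2 * (\<Sum>k<K. vnorm p (L k \<omega>)) \<partial>M) = c2 * (\<Sum>k<K. (\<integral>\<omega>. vnorm p (L k \<omega>) \<partial>M))"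
    by (simp add: Bochner_Integration.integral_sum int5)
  finally have main: "(\<integral>\<omega>. g (xbar \<omega>) \<partial>M) \<le> 1 / (\<sigma> * real K) * (\<integral>\<omega>. L K \<omega> i \<partial>M) + c1 + c2 * (\<Sum>k<K. (\<integral>\<omega>. vnorm p (L k \<omega>) \<partial>M))" .
  show "(\<integral>\<omega>. (\<integral>\<omega>'. G i ((1 / real K) *\<^sub>R (\<Sum>k<K. fst (slpmm C p \<sigma> \<alpha> F G v0 v x0 (\<lambda>j. \<xi> j \<omega>) k))) (\<xi> 0 \<omega>') \<partial>M) \<partial>M)
    \<le> 1 / (\<sigma> * real K) * (\<integral>\<omega>. snd (slpmm C p \<sigma> \<alpha> F G v0 v x0 (\<lambda>j. \<xi> j \<omega>) K) i \<partial>M)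
      + \<kappa>g / \<alpha> * (\<kappa>f + sqrt (real p) * \<nu>g * \<kappa>g * \<sigma>)
      + sqrt (real p) * \<kappa>g^2 / (\<alpha> * real K) *
          (\<Sum>k<K. (\<integral>\<omega>. vnorm p (snd (slpmm C p \<sigma> \<alpha> F G v0 v x0 (\<lambda>j. \<xi> j \<omega>) k)) \<partial>M))"
    using main by (simp add: g_def xbar_def X_def L_def S_def c1_def c2_def)
qed


end
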